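(* Let $1\le r\le s$ and let $H$ be a fixed $s$-uniform hypergraph with at least $s$ vertices. Then $\tau^{(r)}(H)\ge n^{\,r-1/\mu^{(r)}(H)}$; that is, for every strategy and every $t=t(n)=o(n^{\,r-1/\mu^{(r)}(H)})$, a.a.s. $G^{(r,s)}_t$ does not contain a copy of $H$.
   Context: Semi-random hypergraph process: fix integers $1\le r\le s$ and $n\ge s$. Start with the empty $s$-uniform multi-hypergraph $G_0^{(r,s)}$ on vertex set $[n]$. In each step $t\ge1$, a set $U_t$ of $r$ vertices is chosen uniformly at random among all $r$-subsets of $[n]$, independently of all previous choices; the player then chooses a set $V_t$ of $s-r$ vertices of $[n]\setminus U_t$ (when $r=s$, $V_t=\emptyset$), and the edge $U_t\cup V_t$ is added to form $G^{(r,s)}_t$ (parallel edges allowed). A strategy is, for each $n$, a sequence of functions determining $V_t$ from $(U_1,V_1,\dots,U_{t-1},V_{t-1},U_t)$. A.a.s. means with probability tending to $1$ as $n\to\infty$. "Contains $H$" means has a sub-hypergraph isomorphic to $H$. "$\tau^{(r)}(H)\ge f$" means for every strategy and every $t=o(f(n))$, a.a.s. $G^{(r,s)}_t$ does not contain $H$. For an $s$-graph $H$ write $v_H=|V(H)|$, $e_H=|E(H)|$, $f^{(r)}(H)=\frac{e_H}{v_H-s+r}$ and $\mu^{(r)}(H)=\max\{f^{(r)}(H'):\ H'\subseteq H,\ v_{H'}\ge s\}$, the maximum over sub-hypergraphs $H'$ of $H$ with at least $s$ vertices. *)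

theory Defs
  imports "HOL-Probability.Probability" "HOL-Library.Landau_Symbols"
begin

definition r_sets :: "nat \<Rightarrow> nat \<Rightarrow> nat set set" where
  "r_sets n r = {U. U \<subseteq> {..<n} \<and> card U = r}"

text \<open>A history is the list of pairs (U_1,V_1),...,(U_t,V_t).\<close>
type_synonym history = "(nat set \<times> nat set) list"

text \<open>A strategy: for each n, a function of the history and the new random set U_t, giving V_t.\<close>
type_synonym strategy = "nat \<Rightarrow> history \<Rightarrow> nat set \<Rightarrow> nat set"

definition valid_strategy :: "nat \<Rightarrow> nat \<Rightarrow> strategy \<Rightarrow> bool" where
  "valid_strategy r s St \<longleftrightarrow>
     (\<forall>n\<ge>s. \<forall>h U. U \<in> r_sets n r \<longrightarrow>
        St n h U \<subseteq> {..<n} - U \<and> card (St n h U) = s - r)"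

fun semi_random_history :: "nat \<Rightarrow> strategy \<Rightarrow> nat \<Rightarrow> nat \<Rightarrow> history pmf" where
  "semi_random_history r St n 0 = return_pmf []"
| "semi_random_history r St n (Suc t) =
     bind_pmf (semi_random_history r St n t)
       (\<lambda>h. map_pmf (\<lambda>U. h @ [(U, St n h U)]) (pmf_of_set (r_sets n r)))"

text \<open>The edge multiset (as a list) of G_t.\<close>
definition edges_of :: "history \<Rightarrow> nat set list" where
  "edges_of h = map (\<lambda>(U, V). U \<union> V) h"

definition contains_copy :: "nat \<Rightarrow> nat set list \<Rightarrow> 'a set \<Rightarrow> 'a set set \<Rightarrow> bool" where
  "contains_copy n G VH EH \<longleftrightarrow>
     (\<exists>\<phi>. inj_on \<phi> VH \<and> \<phi> ` VH \<subseteq> {..<n} \<and> (\<forall>e\<in>EH. \<phi> ` e \<in> set G))"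

definition f_r :: "nat \<Rightarrow> nat \<Rightarrow> 'a set \<Rightarrow> 'a set set \<Rightarrow> real" where
  "f_r r s VH EH = real (card EH) / (real (card VH) - real s + real r)"

definition mu_r :: "nat \<Rightarrow> nat \<Rightarrow> 'a set \<Rightarrow> 'a set set \<Rightarrow> real" where
  "mu_r r s VH EH = Max {f_r r s V' E' | V' E'.
      V' \<subseteq> VH \<and> E' \<subseteq> EH \<and> (\<forall>e\<in>E'. e \<subseteq> V') \<and> card V' \<ge> s}"

end

theory Submission
  imports Defs
begin


lemma choose_prod:
  assumes "b \<le> r" "r \<le> n"
  shows "real ((n-b) choose (r-b)) * (\<Prod>i<b. real (n - i)) = real (n choose r) * (\<Prod>i<b. real (r - i))"
  using assms(1)
proof (induction b)
  case 0 then show ?case by simp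
next
  case (Suc b)
  have IH: "real ((n-b) choose (r-b)) * (\<Prod>i<b. real (n - i)) = real (n choose r) * (\<Prod>i<b. real (r - i))"
    using Suc by simp
  have e1: "n - b = Suc (n - Suc b)" "r - b = Suc (r - Suc b)" using Suc.prems assms by auto
  have key: "(r - b) * ((n-b) choose (r-b)) = (n - b) * ((n - Suc b) choose (r - Suc b))"
    using Suc_times_binomial[of "r - Suc b" "n - Suc b"] e1 by simp
  hence key': "real (r - b) * real ((n-b) choose (r-b)) = real (n - b) * real ((n - Suc b) choose (r - Suc b))"
    by (metis of_nat_mult)
  have "real ((n - Suc b) choose (r - Suc b)) * (\<Prod>i<Suc b. real (n - i))
      = (real (n - b) * real ((n - Suc b) choose (r - Suc b))) * (\<Prod>i<b. real (n - i))"
    by (simp add: lessThan_Suc mult_ac)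
  also have "\<dots> = real (r - b) * (real ((n-b) choose (r-b)) * (\<Prod>i<b. real (n - i)))"
    using key' by (simp add: mult_ac)
  also have "\<dots> = real (n choose r) * (\<Prod>i<Suc b. real (r - i))"
    using IH by (simp add: lessThan_Suc mult_ac)
  finally show ?case .
qed

lemma choose_ratio:
  assumes "b \<le> r" "2 * r \<le> n"
  shows "real n ^ b * real ((n-b) choose (r-b)) \<le> real (2*r) ^ b * real (n choose r)"
proof -
  have p1: "(real n / 2) ^ b \<le> (\<Prod>i<b. real (n - i))"
  proof -
    have "(\<Prod>i<b. real n / 2) \<le> (\<Prod>i<b. real (n - i))"
      by (intro prod_mono) (use assms in auto)
    thus ?thesis by simp
  qed
  have p2: "(\<Prod>i<b. real (r - i)) \<le> real r ^ b"
  proof -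
    have "(\<Prod>i<b. real (r - i)) \<le> (\<Prod>i<b. real r)"
      by (intro prod_mono) auto
    thus ?thesis by simp
  qed
  have "real ((n-b) choose (r-b)) * (real n / 2) ^ b \<le> real ((n-b) choose (r-b)) * (\<Prod>i<b. real (n - i))"
    by (intro mult_left_mono p1) auto
  also have "\<dots> = real (n choose r) * (\<Prod>i<b. real (r - i))"
    using choose_prod assms by simp
  also have "\<dots> \<le> real (n choose r) * real r ^ b"
    by (intro mult_left_mono p2) auto
  finally have "real ((n-b) choose (r-b)) * (real n / 2) ^ b \<le> real (n choose r) * real r ^ b" .
  hence "2 ^ b * (real ((n-b) choose (r-b)) * (real n / 2) ^ b) \<le> 2 ^ b * (real (n choose r) * real r ^ b)"
    by (intro mult_left_mono) auto
  thus ?thesis by (simp add: power_divide power_mult_distrib mult_ac)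
qed


definition gw :: "nat \<Rightarrow> nat set \<Rightarrow> nat set \<Rightarrow> real" where
  "gw n U A = (\<Sum>B\<in>Pow (U \<inter> A). real n ^ card B)"

lemma finite_r_sets: "finite (r_sets n r)"
  unfolding r_sets_def by (rule finite_subset[of _ "Pow {..<n}"]) auto

lemma card_r_sets: "card (r_sets n r) = n choose r"
  unfolding r_sets_def using n_subsets[of "{..<n}" r] by simp

lemma card_superset:
  assumes "B \<subseteq> {..<n}"
  shows "card {U \<in> r_sets n r. B \<subseteq> U} \<le> (n - card B) choose (r - card B)"
proof -
  have fB: "finite B" using assms finite_subset by blast
  have "card {U \<in> r_sets n r. B \<subseteq> U} \<le> card {W. W \<subseteq> {..<n} - B \<and> card W = r - card B}"
  proof (rule card_inj_on_le[where f = "\<lambda>U. U - B"])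
    show "inj_on (\<lambda>U. U - B) {U \<in> r_sets n r. B \<subseteq> U}"
      by (auto simp: inj_on_def)
    show "(\<lambda>U. U - B) ` {U \<in> r_sets n r. B \<subseteq> U} \<subseteq> {W. W \<subseteq> {..<n} - B \<and> card W = r - card B}"
    proof clarify
      fix U assume "U \<in> r_sets n r" "B \<subseteq> U"
      then have "U \<subseteq> {..<n}" "card U = r" by (auto simp: r_sets_def)
      then show "U - B \<subseteq> {..<n} - B \<and> card (U - B) = r - card B"
        using \<open>B \<subseteq> U\<close> fB by (auto simp: card_Diff_subset)
    qed
    show "finite {W. W \<subseteq> {..<n} - B \<and> card W = r - card B}" by auto
  qed
  also have "\<dots> = card ({..<n} - B) choose (r - card B)"
    by (rule n_subsets) auto
  also have "card ({..<n} - B) = n - card B" using assms fB by (simp add: card_Diff_subset)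
  finally show ?thesis .
qed

lemma gw_sum_bound:
  assumes "finite A" "card A \<le> M" "2 * r \<le> n" "1 \<le> r"
  shows "(\<Sum>U\<in>r_sets n r. gw n U A) \<le> 2 ^ M * real (2*r) ^ r * real (n choose r)"
proof -
  have "(\<Sum>U\<in>r_sets n r. gw n U A) = (\<Sum>U\<in>r_sets n r. \<Sum>B\<in>{B\<in>Pow A. B \<subseteq> U}. real n ^ card B)"
    unfolding gw_def by (intro sum.cong refl) auto
  also have "\<dots> = (\<Sum>B\<in>Pow A. \<Sum>U\<in>{U\<in>r_sets n r. B \<subseteq> U}. real n ^ card B)"
    by (rule sum.swap_restrict) (use assms finite_r_sets in auto)
  also have "\<dots> = (\<Sum>B\<in>Pow A. real n ^ card B * real (card {U\<in>r_sets n r. B \<subseteq> U}))"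
    by (simp add: mult.commute)
  also have "\<dots> \<le> (\<Sum>B\<in>Pow A. real (2*r) ^ r * real (n choose r))"
  proof (rule sum_mono)
    fix B assume B: "B \<in> Pow A"
    show "real n ^ card B * real (card {U\<in>r_sets n r. B \<subseteq> U}) \<le> real (2*r) ^ r * real (n choose r)"
    proof (cases "B \<subseteq> {..<n} \<and> card B \<le> r")
      case True
      have "real n ^ card B * real (card {U\<in>r_sets n r. B \<subseteq> U})
          \<le> real n ^ card B * real ((n - card B) choose (r - card B))"
        by (intro mult_left_mono) (use card_superset True in auto)
      also have "\<dots> \<le> real (2*r) ^ card B * real (n choose r)"
        using choose_ratio True assms by auto
      also have "\<dots> \<le> real (2*r) ^ r * real (n choose r)"
        by (intro mult_right_mono power_increasing) (use True assms in auto)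
      finally show ?thesis .
    next
      case False
      have "{U\<in>r_sets n r. B \<subseteq> U} = {}"
      proof -
        { fix U assume U: "U \<in> r_sets n r" "B \<subseteq> U"
          then have "U \<subseteq> {..<n}" "card U = r" "finite U" by (auto simp: r_sets_def intro: finite_subset)
          with U False have False using card_mono by fastforce }
        thus ?thesis by blast
      qed
      then show ?thesis by (simp only: card.empty) simp
    qed
  qed
  also have "\<dots> = 2 ^ card A * (real (2*r) ^ r * real (n choose r))"
    using assms by (simp add: card_Pow)
  also have "\<dots> \<le> 2 ^ M * (real (2*r) ^ r * real (n choose r))"
    by (intro mult_right_mono) (use assms in auto)
  finally show ?thesis by (simp add: mult_ac)
qed


definition edge :: "history \<Rightarrow> nat \<Rightarrow> nat set" where
  "edge h i = fst (h!i) \<union> snd (h!i)"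
definition Aset :: "history \<Rightarrow> nat set \<Rightarrow> nat \<Rightarrow> nat set" where
  "Aset h I i = (\<Union>l\<in>{l\<in>I. l<i}. edge h l)"
definition PI :: "nat \<Rightarrow> history \<Rightarrow> nat set \<Rightarrow> real" where
  "PI n h I = (\<Prod>i\<in>I. gw n (fst (h!i)) (Aset h I i))"
definition Sidx :: "nat \<Rightarrow> nat \<Rightarrow> nat set set" where
  "Sidx t k = {I. I \<subseteq> {..<t} \<and> card I = k}"
definition Z :: "nat \<Rightarrow> nat \<Rightarrow> history \<Rightarrow> real" where
  "Z n k h = (\<Sum>I\<in>Sidx (length h) k. PI n h I)"

lemma finite_Sidx: "finite (Sidx t k)"
  unfolding Sidx_def by (rule finite_subset[of _ "Pow {..<t}"]) auto

lemma gw_nonneg: "0 \<le> gw n U A"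
  unfolding gw_def by (intro sum_nonneg) auto

lemma PI_nonneg: "0 \<le> PI n h I"
  unfolding PI_def by (intro prod_nonneg) (auto intro: gw_nonneg)

lemma Z_nonneg: "0 \<le> Z n k h"
  unfolding Z_def by (intro sum_nonneg) (auto intro: PI_nonneg)

lemma Sidx_0: "Sidx t 0 = {{}}"
proof -
  have "I = {}" if "I \<subseteq> {..<t}" "card I = 0" for I
    using that finite_subset[OF that(1)] by auto
  thus ?thesis unfolding Sidx_def by auto
qed

lemma Z_0: "Z n 0 h = 1"
  unfolding Z_def Sidx_0 by (simp add: PI_def)

lemma Z_Nil: "Z n (Suc k) [] = 0"
proof -
  have "Sidx 0 (Suc k) = {}" unfolding Sidx_def by auto
  thus ?thesis unfolding Z_def by simp
qed

lemma Sidx_Suc: "Sidx (Suc t) (Suc k) = Sidx t (Suc k) \<union> insert t ` Sidx t k"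
proof (intro equalityI subsetI)
  fix I assume I: "I \<in> Sidx (Suc t) (Suc k)"
  hence fI: "finite I" unfolding Sidx_def by (auto intro: finite_subset)
  show "I \<in> Sidx t (Suc k) \<union> insert t ` Sidx t k"
  proof (cases "t \<in> I")
    case True
    have "I - {t} \<in> Sidx t k" using I True fI unfolding Sidx_def by auto
    moreover have "I = insert t (I - {t})" using True by auto
    ultimately show ?thesis by blast
  next
    case False
    then have "I \<in> Sidx t (Suc k)" using I unfolding Sidx_def by (auto simp: less_Suc_eq)
    then show ?thesis by blast
  qed
next
  fix I assume "I \<in> Sidx t (Suc k) \<union> insert t ` Sidx t k"
  then show "I \<in> Sidx (Suc t) (Suc k)"
  proof
    assume "I \<in> Sidx t (Suc k)" then show ?thesis unfolding Sidx_def by auto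
  next
    assume "I \<in> insert t ` Sidx t k"
    then obtain J where J: "J \<in> Sidx t k" "I = insert t J" by blast
    hence "finite J" "t \<notin> J" unfolding Sidx_def by (auto intro: finite_subset)
    then show ?thesis using J unfolding Sidx_def by auto
  qed
qed

lemma PI_snoc_old:
  assumes "I \<subseteq> {..<length h}"
  shows "PI n (h @ [x]) I = PI n h I"
proof -
  have e: "edge (h @ [x]) l = edge h l" if "l < length h" for l
    using that by (simp add: edge_def nth_append)
  have a: "Aset (h @ [x]) I i = Aset h I i" if "i \<in> I" for i
    unfolding Aset_def using assms e by (intro SUP_cong) auto
  show ?thesis unfolding PI_def
    by (intro prod.cong refl) (use assms a in \<open>auto simp: nth_append\<close>)
qed

lemma PI_snoc_new:
  assumes "J \<subseteq> {..<length h}"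
  shows "PI n (h @ [x]) (insert (length h) J) = PI n h J * gw n (fst x) (\<Union>l\<in>J. edge h l)"
proof -
  let ?t = "length h"
  have fJ: "finite J" using assms finite_subset by blast
  have tJ: "?t \<notin> J" using assms by auto
  have e: "edge (h @ [x]) l = edge h l" if "l < length h" for l
    using that by (simp add: edge_def nth_append)
  have a1: "Aset (h @ [x]) (insert ?t J) ?t = (\<Union>l\<in>J. edge h l)"
    unfolding Aset_def using assms e by auto
  have a2: "Aset (h @ [x]) (insert ?t J) i = Aset h J i" if "i \<in> J" for i
    unfolding Aset_def using assms e that by (intro SUP_cong) auto
  have "PI n (h @ [x]) (insert ?t J) = gw n (fst x) (\<Union>l\<in>J. edge h l) *
          (\<Prod>i\<in>J. gw n (fst ((h @ [x])!i)) (Aset (h @ [x]) (insert ?t J) i))"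
    unfolding PI_def using fJ tJ a1 by (simp add: prod.insert)
  also have "(\<Prod>i\<in>J. gw n (fst ((h @ [x])!i)) (Aset (h @ [x]) (insert ?t J) i)) = PI n h J"
    unfolding PI_def by (intro prod.cong refl) (use assms a2 in \<open>auto simp: nth_append\<close>)
  finally show ?thesis by (simp add: mult.commute)
qed

lemma Z_snoc:
  "Z n (Suc k) (h @ [x]) = Z n (Suc k) h + (\<Sum>J\<in>Sidx (length h) k. PI n h J * gw n (fst x) (\<Union>l\<in>J. edge h l))"
proof -
  let ?t = "length h"
  have disj: "Sidx ?t (Suc k) \<inter> insert ?t ` Sidx ?t k = {}"
    unfolding Sidx_def by auto
  have inj: "inj_on (insert ?t) (Sidx ?t k)"
  proof (rule inj_onI)
    fix x y assume "x \<in> Sidx ?t k" "y \<in> Sidx ?t k" "insert ?t x = insert ?t y"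
    moreover have "?t \<notin> x" "?t \<notin> y" using calculation unfolding Sidx_def by auto
    ultimately show "x = y" using insert_ident by metis
  qed
  have "Z n (Suc k) (h @ [x]) = (\<Sum>I\<in>Sidx ?t (Suc k) \<union> insert ?t ` Sidx ?t k. PI n (h @ [x]) I)"
    unfolding Z_def by (simp add: Sidx_Suc)
  also have "\<dots> = (\<Sum>I\<in>Sidx ?t (Suc k). PI n (h @ [x]) I) + (\<Sum>I\<in>insert ?t ` Sidx ?t k. PI n (h @ [x]) I)"
    by (rule sum.union_disjoint) (auto simp: finite_Sidx disj)
  also have "(\<Sum>I\<in>Sidx ?t (Suc k). PI n (h @ [x]) I) = Z n (Suc k) h"
    unfolding Z_def by (intro sum.cong refl PI_snoc_old) (auto simp: Sidx_def)
  also have "(\<Sum>I\<in>insert ?t ` Sidx ?t k. PI n (h @ [x]) I) = (\<Sum>J\<in>Sidx ?t k. PI n (h @ [x]) (insert ?t J))"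
    by (rule sum.reindex[OF inj, unfolded comp_def])
  also have "\<dots> = (\<Sum>J\<in>Sidx ?t k. PI n h J * gw n (fst x) (\<Union>l\<in>J. edge h l))"
    by (intro sum.cong refl PI_snoc_new) (auto simp: Sidx_def)
  finally show ?thesis .
qed


definition good_hist :: "nat \<Rightarrow> nat \<Rightarrow> nat \<Rightarrow> history \<Rightarrow> bool" where
  "good_hist n r s h \<longleftrightarrow> (\<forall>x\<in>set h. fst x \<in> r_sets n r \<and> snd x \<subseteq> {..<n} - fst x \<and> card (snd x) = s - r)"

lemma r_sets_ne: "r \<le> n \<Longrightarrow> {..<r} \<in> r_sets n r"
  unfolding r_sets_def by auto

lemma support:
  assumes "valid_strategy r s St" "s \<le> n" "r \<le> n"
  shows "h \<in> set_pmf (semi_random_history r St n t) \<Longrightarrow> length h = t \<and> good_hist n r s h"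
proof (induction t arbitrary: h)
  case 0 then show ?case by (simp add: good_hist_def)
next
  case (Suc t)
  have ne: "r_sets n r \<noteq> {}" using r_sets_ne[OF assms(3)] by blast
  from Suc.prems obtain h0 U where h0: "h0 \<in> set_pmf (semi_random_history r St n t)"
    and U: "U \<in> r_sets n r" and h: "h = h0 @ [(U, St n h0 U)]"
    using ne finite_r_sets by auto
  have "St n h0 U \<subseteq> {..<n} - U \<and> card (St n h0 U) = s - r"
    using assms(1,2) U unfolding valid_strategy_def by blast
  with Suc.IH[OF h0] U show ?case unfolding h good_hist_def by auto
qed

lemma card_edge_le:
  assumes "good_hist n r s h" "l < length h" "r \<le> s"
  shows "card (edge h l) \<le> s" "finite (edge h l)"
proof -
  have x: "h!l \<in> set h" using assms by simp
  hence "fst (h!l) \<in> r_sets n r" "snd (h!l) \<subseteq> {..<n} - fst (h!l)" "card (snd (h!l)) = s - r"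
    using assms unfolding good_hist_def by blast+
  hence c: "card (fst (h!l)) = r" "finite (snd (h!l))" "finite (fst (h!l))"
    unfolding r_sets_def by (auto intro: finite_subset)
  have "card (edge h l) \<le> card (fst (h!l)) + card (snd (h!l))"
    unfolding edge_def by (rule card_Un_le)
  also have "\<dots> = s" using c \<open>card (snd (h!l)) = s - r\<close> assms by simp
  finally show "card (edge h l) \<le> s" .
  show "finite (edge h l)" unfolding edge_def using c by simp
qed

lemma inner_step:
  assumes "good_hist n r s h" "r \<le> s" "k < m" "2 * r \<le> n" "1 \<le> r"
  defines "Cc \<equiv> (2::real) ^ (m * s) * real (2 * r) ^ r"
  shows "(\<Sum>U\<in>r_sets n r. Z n (Suc k) (h @ [(U, St n h U)]))
         \<le> real (card (r_sets n r)) * (Z n (Suc k) h + Cc * Z n k h)"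
proof -
  let ?R = "r_sets n r"
  let ?E = "\<lambda>J. \<Union>l\<in>J. edge h l"
  have bnd: "(\<Sum>U\<in>?R. gw n U (?E J)) \<le> Cc * real (card ?R)" if J: "J \<in> Sidx (length h) k" for J
  proof -
    have Jsub: "J \<subseteq> {..<length h}" "card J = k" using J unfolding Sidx_def by auto
    have fE: "finite (?E J)" using card_edge_le[OF assms(1) _ assms(2)] Jsub
      by (intro finite_UN_I) (auto intro: finite_subset)
    have "card (?E J) \<le> (\<Sum>l\<in>J. card (edge h l))" by (rule card_UN_le) (use Jsub in \<open>auto intro: finite_subset\<close>)
    also have "\<dots> \<le> (\<Sum>l\<in>J. s)" by (intro sum_mono) (use card_edge_le[OF assms(1) _ assms(2)] Jsub in auto)
    also have "\<dots> = k * s" using Jsub by simp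
    also have "\<dots> \<le> m * s" using assms by simp
    finally have "card (?E J) \<le> m * s" .
    from gw_sum_bound[OF fE this assms(4,5)] show ?thesis
      by (simp add: Cc_def card_r_sets)
  qed
  have "(\<Sum>U\<in>?R. Z n (Suc k) (h @ [(U, St n h U)]))
      = (\<Sum>U\<in>?R. Z n (Suc k) h + (\<Sum>J\<in>Sidx (length h) k. PI n h J * gw n U (?E J)))"
    by (simp add: Z_snoc)
  also have "\<dots> = real (card ?R) * Z n (Suc k) h + (\<Sum>J\<in>Sidx (length h) k. PI n h J * (\<Sum>U\<in>?R. gw n U (?E J)))"
    by (simp add: sum.distrib sum_distrib_left sum.swap[of _ ?R])
  also have "\<dots> \<le> real (card ?R) * Z n (Suc k) h + (\<Sum>J\<in>Sidx (length h) k. PI n h J * (Cc * real (card ?R)))"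
    by (intro add_left_mono sum_mono mult_left_mono bnd PI_nonneg)
  also have "\<dots> = real (card ?R) * (Z n (Suc k) h + Cc * Z n k h)"
    unfolding Z_def by (simp add: algebra_simps sum_distrib_left sum_distrib_right)
  finally show ?thesis .
qed


lemma inner_integral:
  assumes "good_hist n r s h" "r \<le> s" "k < m" "2 * r \<le> n" "1 \<le> r"
  defines "Cc \<equiv> (2::real) ^ (m * s) * real (2 * r) ^ r"
  shows "(\<integral>\<^sup>+U. ennreal (Z n (Suc k) (h @ [(U, St n h U)])) \<partial>measure_pmf (pmf_of_set (r_sets n r)))
         \<le> ennreal (Z n (Suc k) h) + ennreal Cc * ennreal (Z n k h)"
proof -
  let ?R = "r_sets n r"
  have ne: "?R \<noteq> {}" using r_sets_ne[of r n] assms by auto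
  have cpos0: "0 < card ?R" using ne finite_r_sets card_gt_0_iff by blast
  hence cpos: "0 < real (card ?R)" by simp
  have Cc0: "0 \<le> Cc" unfolding Cc_def by simp
  have "(\<integral>\<^sup>+U. ennreal (Z n (Suc k) (h @ [(U, St n h U)])) \<partial>measure_pmf (pmf_of_set ?R))
      = (\<Sum>U\<in>?R. ennreal (Z n (Suc k) (h @ [(U, St n h U)]))) / of_nat (card ?R)"
    by (rule nn_integral_pmf_of_set[OF ne finite_r_sets])
  also have "\<dots> = ennreal (\<Sum>U\<in>?R. Z n (Suc k) (h @ [(U, St n h U)])) / ennreal (real (card ?R))"
    by (simp add: Z_nonneg ennreal_of_nat_eq_real_of_nat)
  also have "\<dots> = ennreal ((\<Sum>U\<in>?R. Z n (Suc k) (h @ [(U, St n h U)])) / real (card ?R))"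
    by (rule divide_ennreal) (use cpos0 in \<open>auto intro: sum_nonneg Z_nonneg\<close>)
  also have "\<dots> \<le> ennreal (Z n (Suc k) h + Cc * Z n k h)"
  proof (rule ennreal_leI)
    have "(\<Sum>U\<in>?R. Z n (Suc k) (h @ [(U, St n h U)])) \<le> real (card ?R) * (Z n (Suc k) h + Cc * Z n k h)"
      using inner_step[OF assms(1-5)] unfolding Cc_def by simp
    thus "(\<Sum>U\<in>?R. Z n (Suc k) (h @ [(U, St n h U)])) / real (card ?R) \<le> Z n (Suc k) h + Cc * Z n k h"
      using cpos by (simp add: divide_le_eq mult.commute)
  qed
  also have "\<dots> = ennreal (Z n (Suc k) h) + ennreal Cc * ennreal (Z n k h)"
    using Cc0 by (simp add: Z_nonneg ennreal_mult)
  finally show ?thesis .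
qed

lemma expect_bound:
  fixes m :: nat
  assumes "valid_strategy r s St" "r \<le> s" "s \<le> n" "2 * r \<le> n" "1 \<le> r"
  defines "Cc \<equiv> (2::real) ^ (m * s) * real (2 * r) ^ r"
  shows "j \<le> m \<Longrightarrow> (\<integral>\<^sup>+h. ennreal (Z n j h) \<partial>measure_pmf (semi_random_history r St n t))
           \<le> ennreal (real (t choose j) * Cc ^ j)"
proof (induction t arbitrary: j)
  case 0
  then show ?case by (cases j) (auto simp: Z_0 Z_Nil)
next
  case (Suc t)
  have Cc0: "0 \<le> Cc" unfolding Cc_def by simp
  show ?case
  proof (cases j)
    case 0
    then show ?thesis by (simp add: Z_0 measure_pmf.emeasure_space_1)
  next
    case (Suc k)
    have km: "k < m" using Suc.prems Suc by simp
    let ?H = "semi_random_history r St n t"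
    have "(\<integral>\<^sup>+h. ennreal (Z n j h) \<partial>measure_pmf (semi_random_history r St n (Suc t)))
        = (\<integral>\<^sup>+h. (\<integral>\<^sup>+U. ennreal (Z n (Suc k) (h @ [(U, St n h U)])) \<partial>measure_pmf (pmf_of_set (r_sets n r))) \<partial>measure_pmf ?H)"
      by (simp add: Suc)
    also have "\<dots> \<le> (\<integral>\<^sup>+h. ennreal (Z n (Suc k) h) + ennreal Cc * ennreal (Z n k h) \<partial>measure_pmf ?H)"
    proof (rule nn_integral_mono_AE)
      show "AE h in measure_pmf ?H. (\<integral>\<^sup>+U. ennreal (Z n (Suc k) (h @ [(U, St n h U)])) \<partial>measure_pmf (pmf_of_set (r_sets n r)))
         \<le> ennreal (Z n (Suc k) h) + ennreal Cc * ennreal (Z n k h)"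
        unfolding AE_measure_pmf_iff
        using support[OF assms(1,3)] assms inner_integral[OF _ assms(2) km assms(4,5)]
        unfolding Cc_def by auto
    qed
    also have "\<dots> = (\<integral>\<^sup>+h. ennreal (Z n (Suc k) h) \<partial>measure_pmf ?H) + ennreal Cc * (\<integral>\<^sup>+h. ennreal (Z n k h) \<partial>measure_pmf ?H)"
      by (simp add: nn_integral_add nn_integral_cmult)
    also have "\<dots> \<le> ennreal (real (t choose Suc k) * Cc ^ Suc k) + ennreal Cc * ennreal (real (t choose k) * Cc ^ k)"
      by (intro add_mono mult_left_mono Suc.IH) (use km in auto)
    also have "\<dots> = ennreal (real (Suc t choose j) * Cc ^ j)"
      using Cc0 by (simp add: Suc ennreal_mult[symmetric] algebra_simps)
    finally show ?thesis .
  qed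
qed


lemma gw_ge: "finite U \<Longrightarrow> real n ^ card (U \<inter> A) \<le> gw n U A"
  unfolding gw_def by (rule member_le_sum[where i = "U \<inter> A"]) auto

lemma copy_Z:
  fixes V' :: "'a set" and E' :: "'a set set"
  assumes gh: "good_hist n r s h" and rs: "r \<le> s" and fV: "finite V'" and Ene: "E' \<noteq> {}"
    and EV: "\<forall>e\<in>E'. e \<subseteq> V'" and cc: "contains_copy n (edges_of h) V' E'"
  shows "\<exists>I\<in>Sidx (length h) (card E').
           real n ^ (\<Sum>i\<in>I. card (fst (h!i) \<inter> Aset h I i)) \<le> Z n (card E') h
         \<and> card E' * r + (s - r) \<le> (\<Sum>i\<in>I. card (fst (h!i) \<inter> Aset h I i)) + card V'"
proof -
  have fE: "finite E'" using fV EV by (intro finite_subset[of E' "Pow V'"]) auto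
  obtain \<phi> where inj: "inj_on \<phi> V'" and im: "\<phi> ` V' \<subseteq> {..<n}" and ed: "\<forall>e\<in>E'. \<phi> ` e \<in> set (edges_of h)"
    using cc unfolding contains_copy_def by blast
  have ex: "\<exists>i. i < length h \<and> edge h i = \<phi> ` e" if "e \<in> E'" for e
  proof -
    from ed that have "\<phi> ` e \<in> set (edges_of h)" by blast
    then obtain i where "i < length h" "edges_of h ! i = \<phi> ` e"
      unfolding in_set_conv_nth by (auto simp: edges_of_def)
    hence "edge h i = \<phi> ` e" by (auto simp: edges_of_def edge_def split: prod.splits)
    thus ?thesis using \<open>i < length h\<close> by blast
  qed
  define idx where "idx e = (SOME i. i < length h \<and> edge h i = \<phi> ` e)" for e
  have idx: "idx e < length h \<and> edge h (idx e) = \<phi> ` e" if "e \<in> E'" for e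
    unfolding idx_def by (rule someI_ex[OF ex[OF that]])
  have injidx: "inj_on idx E'"
  proof (rule inj_onI)
    fix e e' assume "e \<in> E'" "e' \<in> E'" "idx e = idx e'"
    hence "\<phi> ` e = \<phi> ` e'" using idx by metis
    thus "e = e'" using inj_on_image_eq_iff[OF inj] EV \<open>e \<in> E'\<close> \<open>e' \<in> E'\<close> by blast
  qed
  define I where "I = idx ` E'"
  have cI: "card I = card E'" unfolding I_def using card_image[OF injidx] .
  have Isub: "I \<subseteq> {..<length h}" unfolding I_def using idx by auto
  have fI: "finite I" unfolding I_def using fE by simp
  have Ine: "I \<noteq> {}" unfolding I_def using Ene by simp
  have IS: "I \<in> Sidx (length h) (card E')" unfolding Sidx_def using Isub cI by auto
  define W where "W = \<phi> ` V'"
  have cW: "card W = card V'" unfolding W_def using card_image[OF inj] .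
  have eW: "edge h i \<subseteq> W" if "i \<in> I" for i
    using that idx EV unfolding I_def W_def by (auto intro!: imageI) blast
  define U where "U i = fst (h!i)" for i
  define V where "V i = snd (h!i)" for i
  define A where "A i = Aset h I i" for i
  have props: "U i \<in> r_sets n r \<and> V i \<subseteq> {..<n} - U i \<and> card (V i) = s - r" if "i \<in> I" for i
  proof -
    have "h!i \<in> set h" using that Isub by auto
    thus ?thesis using gh unfolding good_hist_def U_def V_def by blast
  qed
  have cU: "card (U i) = r" "finite (U i)" "finite (V i)" "U i \<inter> V i = {}" if "i \<in> I" for i
    using props[OF that] unfolding r_sets_def by (auto intro: finite_subset)
  have eUV: "edge h i = U i \<union> V i" for i unfolding edge_def U_def V_def by simp
  define i0 where "i0 = Min I"
  have i0: "i0 \<in> I" "\<And>i. i \<in> I \<Longrightarrow> i0 \<le> i" unfolding i0_def using fI Ine by auto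
  define D where "D i = U i - A i" for i
  have inA: "edge h i \<subseteq> A j" if "i \<in> I" "j \<in> I" "i < j" for i j
    using that unfolding A_def Aset_def by auto
  have disj: "D i \<inter> D j = {}" if "i \<in> I" "j \<in> I" "i \<noteq> j" for i j
  proof (cases "i < j")
    case True
    then show ?thesis using inA[OF that(1,2) True] eUV unfolding D_def by auto
  next
    case False
    then have "j < i" using that by simp
    then show ?thesis using inA[OF that(2,1)] eUV unfolding D_def by auto
  qed
  have disj0: "V i0 \<inter> (\<Union>i\<in>I. D i) = {}"
  proof -
    { fix i x assume i: "i \<in> I" and x: "x \<in> V i0" "x \<in> D i"
      have False
      proof (cases "i = i0")
        case True then show False using cU(4)[OF i] x unfolding D_def by auto
      next
        case False
        then have "i0 < i" using i0(2)[OF i] by linarith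
        then show False using inA[OF i0(1) i] eUV x unfolding D_def by auto
      qed }
    thus ?thesis by blast
  qed
  have sub: "V i0 \<union> (\<Union>i\<in>I. D i) \<subseteq> W"
    using eW eUV i0 unfolding D_def by blast
  have fW: "finite W" unfolding W_def using fV by simp
  have "card (V i0) + (\<Sum>i\<in>I. card (D i)) = card (V i0 \<union> (\<Union>i\<in>I. D i))"
    using cU disj disj0 fI i0 unfolding D_def
    by (subst card_Un_disjoint) (auto simp: card_UN_disjoint)
  also have "\<dots> \<le> card V'" using card_mono[OF fW sub] cW by simp
  finally have c1: "card (V i0) + (\<Sum>i\<in>I. card (D i)) \<le> card V'" .
  have c2: "(\<Sum>i\<in>I. card (U i \<inter> A i)) + (\<Sum>i\<in>I. card (D i)) = card E' * r"
  proof -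
    have "(\<Sum>i\<in>I. card (U i \<inter> A i)) + (\<Sum>i\<in>I. card (D i)) = (\<Sum>i\<in>I. card (U i \<inter> A i) + card (D i))"
      by (simp add: sum.distrib)
    also have "\<dots> = (\<Sum>i\<in>I. r)"
      by (intro sum.cong refl) (use cU in \<open>auto simp: D_def card_Int_Diff[symmetric]\<close>)
    finally show ?thesis using cI by simp
  qed
  have ineq: "card E' * r + (s - r) \<le> (\<Sum>i\<in>I. card (U i \<inter> A i)) + card V'"
    using c1 c2 props[OF i0(1)] by linarith
  have "real n ^ (\<Sum>i\<in>I. card (U i \<inter> A i)) = (\<Prod>i\<in>I. real n ^ card (U i \<inter> A i))"
    by (rule power_sum)
  also have "\<dots> \<le> (\<Prod>i\<in>I. gw n (U i) (A i))"
    by (intro prod_mono conjI gw_ge) (use cU in auto)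
  also have "\<dots> = PI n h I" unfolding PI_def U_def A_def by simp
  also have "\<dots> \<le> Z n (card E') h"
    unfolding Z_def by (rule member_le_sum[OF IS]) (auto simp: PI_nonneg finite_Sidx)
  finally show ?thesis using IS ineq unfolding U_def A_def by blast
qed


lemma markov_pmf:
  assumes "(\<integral>\<^sup>+x. ennreal (f x) \<partial>measure_pmf p) \<le> ennreal B" "0 < c" "\<And>x. 0 \<le> f x" "0 \<le> B"
  shows "measure_pmf.prob p {x. c \<le> f x} \<le> B / c"
proof -
  have "emeasure (measure_pmf p) {x\<in>space (measure_pmf p). 1 \<le> ennreal (1/c) * ennreal (f x)}
        \<le> ennreal (1/c) * (\<integral>\<^sup>+x. ennreal (f x) * indicator (space (measure_pmf p)) x \<partial>measure_pmf p)"
    by (rule nn_integral_Markov_inequality) auto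
  moreover have "{x\<in>space (measure_pmf p). 1 \<le> ennreal (1/c) * ennreal (f x)} = {x. c \<le> f x}"
  proof -
    have "1 \<le> ennreal (1/c) * ennreal (f x) \<longleftrightarrow> c \<le> f x" for x
    proof -
      have "ennreal (1/c) * ennreal (f x) = ennreal (f x / c)"
        using assms by (simp add: ennreal_mult''[symmetric])
      moreover have "1 \<le> ennreal (f x / c) \<longleftrightarrow> 1 \<le> f x / c"
        using assms ennreal_le_iff[of "f x / c" 1] by (simp add: ennreal_1[symmetric] del: ennreal_1)
      moreover have "1 \<le> f x / c \<longleftrightarrow> c \<le> f x" using assms by (simp add: le_divide_eq)
      ultimately show ?thesis by simp
    qed
    thus ?thesis by auto
  qed
  moreover have "(\<integral>\<^sup>+x. ennreal (f x) * indicator (space (measure_pmf p)) x \<partial>measure_pmf p)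
      = (\<integral>\<^sup>+x. ennreal (f x) \<partial>measure_pmf p)" by simp
  ultimately have "emeasure (measure_pmf p) {x. c \<le> f x} \<le> ennreal (1/c) * ennreal B"
    using assms(1) by (metis (no_types, lifting) mult_left_mono order_trans zero_le)
  also have "\<dots> = ennreal (B / c)" using assms by (simp add: ennreal_mult''[symmetric])
  finally show ?thesis using assms
    by (simp add: measure_pmf.emeasure_eq_measure divide_nonneg_pos)
qed


theorem corollary3:
  fixes r s :: nat and VH :: "'a set" and EH :: "'a set set"
    and St :: strategy and t :: "nat \<Rightarrow> nat"
  assumes "1 \<le> r" and "r \<le> s"
    and "finite VH" and "card VH \<ge> s"
    and "\<forall>e\<in>EH. e \<subseteq> VH \<and> card e = s"
    and "EH \<noteq> {}"
    and "valid_strategy r s St"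
    and "(\<lambda>n. real (t n)) \<in> o(\<lambda>n. real n powr (real r - 1 / mu_r r s VH EH))"
  shows "(\<lambda>n. measure_pmf.prob (semi_random_history r St n (t n))
             {h. contains_copy n (edges_of h) VH EH}) \<longlonglongrightarrow> 0"
proof -
  note r1 = assms(1) and rs = assms(2) and fVH = assms(3) and cVH = assms(4)
    and EHp = assms(5) and EHne = assms(6) and valid = assms(7) and small = assms(8)
  define mu where "mu = mu_r r s VH EH"
  define S where "S = {f_r r s V' E' | V' E'.
      V' \<subseteq> VH \<and> E' \<subseteq> EH \<and> (\<forall>e\<in>E'. e \<subseteq> V') \<and> card V' \<ge> s}"
  have fEH: "finite EH" using EHp fVH by (intro finite_subset[of EH "Pow VH"]) auto
  have finS: "finite S"
  proof -
    have "S \<subseteq> (\<lambda>(V', E'). f_r r s V' E') ` (Pow VH \<times> Pow EH)"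
      unfolding S_def by auto
    thus ?thesis by (rule finite_subset) (use fVH fEH in auto)
  qed
  have inS: "f_r r s VH EH \<in> S" unfolding S_def using EHp cVH by blast
  have mu_S: "mu = Max S" unfolding mu_def mu_r_def S_def by simp
  have mu_in: "mu \<in> S" unfolding mu_S using finS inS by (intro Max_in) auto
  have mu_ge: "f_r r s VH EH \<le> mu" unfolding mu_S using finS inS by (intro Max_ge)
  have fpos: "0 < f_r r s VH EH"
  proof -
    have "0 < card EH" using fEH EHne card_gt_0_iff by blast
    moreover have "0 < real (card VH) - real s + real r" using cVH r1 by simp
    ultimately show ?thesis unfolding f_r_def by simp
  qed
  hence mupos: "0 < mu" using mu_ge by simp
  obtain V' E' where V'sub: "V' \<subseteq> VH" and E'sub: "E' \<subseteq> EH" and EV: "\<forall>e\<in>E'. e \<subseteq> V'"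
    and cV': "card V' \<ge> s" and mueq: "mu = f_r r s V' E'"
    using mu_in unfolding S_def by blast
  define m where "m = card E'"
  define v where "v = card V'"
  define D where "D = real v - real s + real r"
  have Dpos: "0 < D" unfolding D_def v_def using cV' r1 by simp
  have mu_def2: "mu = real m / D" using mueq unfolding f_r_def m_def D_def v_def by simp
  have mpos: "0 < m" using mupos Dpos unfolding mu_def2 by (simp add: zero_less_divide_iff)
  have E'ne: "E' \<noteq> {}" using mpos unfolding m_def by auto
  have fV': "finite V'" using V'sub fVH finite_subset by blast
  define a where "a = real r - 1 / mu"
  define K where "K = real m * a"
  have K_eq: "K = real m * real r - D"
    unfolding K_def a_def mu_def2 using mpos Dpos by (simp add: field_simps)
  define Cc where "Cc = (2::real) ^ (m * s) * real (2 * r) ^ r"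
  have Cc0: "0 \<le> Cc" unfolding Cc_def by simp
  define P where "P n = measure_pmf.prob (semi_random_history r St n (t n))
             {h. contains_copy n (edges_of h) VH EH}" for n
  define q where "q n = real (t n) / real n powr a" for n
  have q0: "q \<longlonglongrightarrow> 0"
    using smalloD_tendsto[OF small] unfolding q_def a_def mu_def .
  have g0: "(\<lambda>n. Cc ^ m * q n ^ m) \<longlonglongrightarrow> 0"
  proof -
    have "(\<lambda>n. Cc ^ m * q n ^ m) \<longlonglongrightarrow> Cc ^ m * 0 ^ m"
      by (intro tendsto_intros q0)
    thus ?thesis using mpos by (simp add: power_0_left)
  qed
  have bound: "P n \<le> Cc ^ m * q n ^ m" if n: "n \<ge> s" "n \<ge> 2 * r" for n
  proof -
    let ?H = "semi_random_history r St n (t n)"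
    have npos: "0 < real n" using n r1 by simp
    have n1: "1 \<le> real n" using n r1 by simp
    have rn: "r \<le> n" using n rs by simp
    have sub1: "{h. contains_copy n (edges_of h) VH EH} \<inter> set_pmf ?H \<subseteq> {h. real n powr K \<le> Z n m h}"
    proof clarify
      fix h assume cc: "contains_copy n (edges_of h) VH EH" and hs: "h \<in> set_pmf ?H"
      have gh: "good_hist n r s h" using support[OF valid n(1) rn hs] by simp
      have cc': "contains_copy n (edges_of h) V' E'"
        using cc V'sub E'sub unfolding contains_copy_def by (meson image_mono inj_on_subset order_trans subsetD)
      obtain I where I: "real n ^ (\<Sum>i\<in>I. card (fst (h!i) \<inter> Aset h I i)) \<le> Z n m h"
        and ineq: "m * r + (s - r) \<le> (\<Sum>i\<in>I. card (fst (h!i) \<inter> Aset h I i)) + v"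
        using copy_Z[OF gh rs fV' E'ne EV cc'] unfolding m_def v_def by blast
      define \<Sigma> where "\<Sigma> = (\<Sum>i\<in>I. card (fst (h!i) \<inter> Aset h I i))"
      have "real (m * r + (s - r)) \<le> real (\<Sigma> + v)" using ineq unfolding \<Sigma>_def by linarith
      hence "K \<le> real \<Sigma>" unfolding K_eq D_def using rs by (simp add: of_nat_diff)
      hence "real n powr K \<le> real n powr real \<Sigma>" by (rule powr_mono[OF _ n1])
      also have "\<dots> = real n ^ \<Sigma>" by (rule powr_realpow[OF npos])
      also have "\<dots> \<le> Z n m h" using I unfolding \<Sigma>_def .
      finally show "real n powr K \<le> Z n m h" .
    qed
    have "P n = measure_pmf.prob ?H ({h. contains_copy n (edges_of h) VH EH} \<inter> set_pmf ?H)"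
      unfolding P_def by (rule measure_Int_set_pmf[symmetric])
    also have "\<dots> \<le> measure_pmf.prob ?H {h. real n powr K \<le> Z n m h}"
      by (rule measure_pmf.finite_measure_mono[OF sub1]) simp
    also have "\<dots> \<le> (real (t n choose m) * Cc ^ m) / real n powr K"
    proof (rule markov_pmf)
      show "(\<integral>\<^sup>+h. ennreal (Z n m h) \<partial>measure_pmf ?H) \<le> ennreal (real (t n choose m) * Cc ^ m)"
        using expect_bound[OF valid rs n(1) n(2) r1, of m m "t n"] unfolding Cc_def by simp
    qed (use npos Cc0 Z_nonneg in auto)
    also have "\<dots> \<le> (real (t n) ^ m * Cc ^ m) / real n powr K"
    proof -
      have "t n choose m \<le> t n ^ m"
        by (cases "m \<le> t n") (auto simp: binomial_le_pow binomial_eq_0)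
      hence "real (t n choose m) \<le> real (t n) ^ m" by (metis of_nat_le_iff of_nat_power)
      thus ?thesis by (intro divide_right_mono mult_right_mono) (use Cc0 in auto)
    qed
    also have "\<dots> = Cc ^ m * q n ^ m"
    proof -
      have "(real n powr a) ^ m = real n powr K"
        unfolding K_def using npos by (simp add: powr_power mult.commute)
      thus ?thesis unfolding q_def by (simp add: power_divide)
    qed
    finally show ?thesis .
  qed
  have "P \<longlonglongrightarrow> 0"
  proof (rule tendsto_sandwich[OF _ _ tendsto_const g0])
    show "\<forall>\<^sub>F n in sequentially. 0 \<le> P n" unfolding P_def by simp
    show "\<forall>\<^sub>F n in sequentially. P n \<le> Cc ^ m * q n ^ m"
      using eventually_ge_at_top[of "max s (2 * r)"] by eventually_elim (auto intro: bound)
  qed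
  thus ?thesis unfolding P_def .
qed

end
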